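(* Let $k,r,h$ be positive integers with $r\mid(k+h)$ and $h\ge 2$. If $C$ is a maximally recoverable local $(k,r,h)$-code defined over the finite field $\mathbb{F}_q$, then $q\ge k+1$.
   Context: A local $(k,r,h)$-code over $\mathbb{F}_q$ (with $r\mid(k+h)$) is a linear systematic code of dimension $k$ and length $k+h+\frac{k+h}{r}$ consisting of $k$ data symbols, $h$ heavy parity symbols (each a fixed $\mathbb{F}_q$-linear combination of all data symbols), and, after partitioning the $k+h$ data and heavy parity symbols into $\frac{k+h}{r}$ groups of size $r$, one local parity per group equal to the sum of the group's symbols. A local group is such a group together with its local parity. The code is maximally recoverable if for every set $E$ of coordinates containing exactly one coordinate from each local group, puncturing the code in $E$ (deleting those coordinates) yields a maximum distance separable $[k+h,k]$ code (minimum distance $h+1$). *)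

theory Defs
  imports "HOL-Analysis.Analysis"
begin

text \<open>Coordinates of a local (k,r,h)-code: 0..k-1 data symbols, k..k+h-1 heavy parities,
  k+h+t (t < (k+h) div r) the local parity of group t.\<close>

definition n_groups :: "nat \<Rightarrow> nat \<Rightarrow> nat \<Rightarrow> nat" where
  "n_groups k r h = (k + h) div r"

definition code_coords :: "nat \<Rightarrow> nat \<Rightarrow> nat \<Rightarrow> nat set" where
  "code_coords k r h = {..< k + h + n_groups k r h}"

definition valid_grouping :: "nat \<Rightarrow> nat \<Rightarrow> nat \<Rightarrow> (nat \<Rightarrow> nat) \<Rightarrow> bool" where
  "valid_grouping k r h g \<longleftrightarrow>
     (\<forall>i < k + h. g i < n_groups k r h) \<and>
     (\<forall>t < n_groups k r h. card {i. i < k + h \<and> g i = t} = r)"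

definition messages :: "nat \<Rightarrow> (nat \<Rightarrow> 'a::zero) set" where
  "messages k = {x. \<forall>i\<ge>k. x i = 0}"

definition sym_val :: "nat \<Rightarrow> (nat \<Rightarrow> nat \<Rightarrow> 'a::field) \<Rightarrow> (nat \<Rightarrow> 'a) \<Rightarrow> nat \<Rightarrow> 'a" where
  "sym_val k H x c = (if c < k then x c else (\<Sum>i<k. H (c - k) i * x i))"

definition codeword :: "nat \<Rightarrow> nat \<Rightarrow> (nat \<Rightarrow> nat \<Rightarrow> 'a::field) \<Rightarrow> (nat \<Rightarrow> nat)
    \<Rightarrow> (nat \<Rightarrow> 'a) \<Rightarrow> nat \<Rightarrow> 'a" where
  "codeword k h H g x c =
     (if c < k + h then sym_val k H x c
      else (\<Sum>j\<in>{j. j < k + h \<and> g j = c - (k + h)}. sym_val k H x j))"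

definition local_group :: "nat \<Rightarrow> nat \<Rightarrow> (nat \<Rightarrow> nat) \<Rightarrow> nat \<Rightarrow> nat set" where
  "local_group k h g t = {i. i < k + h \<and> g i = t} \<union> {k + h + t}"

definition admissible_erasure :: "nat \<Rightarrow> nat \<Rightarrow> nat \<Rightarrow> (nat \<Rightarrow> nat) \<Rightarrow> nat set \<Rightarrow> bool" where
  "admissible_erasure k r h g E \<longleftrightarrow>
     E \<subseteq> code_coords k r h \<and>
     (\<forall>t < n_groups k r h. card (E \<inter> local_group k h g t) = 1)"

text \<open>Code punctured in E: codewords restricted to the coordinates outside E
  (represented as functions vanishing outside those coordinates).\<close>
definition punctured_code :: "nat \<Rightarrow> nat \<Rightarrow> nat \<Rightarrow> (nat \<Rightarrow> nat \<Rightarrow> 'a::field) \<Rightarrow> (nat \<Rightarrow> nat)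
    \<Rightarrow> nat set \<Rightarrow> (nat \<Rightarrow> 'a) set" where
  "punctured_code k r h H g E =
     (\<lambda>x c. if c \<in> code_coords k r h - E then codeword k h H g x c else 0) ` messages k"

definition hamming_weight :: "(nat \<Rightarrow> 'a::zero) \<Rightarrow> nat" where
  "hamming_weight w = card {c. w c \<noteq> 0}"

definition is_MDS_code :: "nat \<Rightarrow> nat \<Rightarrow> (nat \<Rightarrow> 'a::{finite,field}) set \<Rightarrow> bool" where
  "is_MDS_code k d C \<longleftrightarrow> card C = CARD('a) ^ k \<and> Min (hamming_weight ` (C - {\<lambda>_. 0})) = d"

definition maximally_recoverable :: "nat \<Rightarrow> nat \<Rightarrow> nat \<Rightarrow> (nat \<Rightarrow> nat \<Rightarrow> 'a::{finite,field})
    \<Rightarrow> (nat \<Rightarrow> nat) \<Rightarrow> bool" where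
  "maximally_recoverable k r h H g \<longleftrightarrow>
     (\<forall>E. admissible_erasure k r h g E \<longrightarrow> is_MDS_code k (h + 1) (punctured_code k r h H g E))"

end

theory Submission
  imports Defs
begin

theorem theorem19:
  fixes k r h :: nat
    and H :: "nat \<Rightarrow> nat \<Rightarrow> 'a::{finite,field}"
    and g :: "nat \<Rightarrow> nat"
  assumes "k > 0" and "r > 0" and "h \<ge> 2" and "r dvd (k + h)"
    and "valid_grouping k r h g"
    and "maximally_recoverable k r h H g"
  shows "CARD('a) \<ge> k + 1"
proof -
  define N where "N = n_groups k r h"
  define E where "E = {k+h..<k+h+N}"
  have adm: "admissible_erasure k r h g E"
  proof -
    have "E \<inter> local_group k h g t = {k+h+t}" if "t < N" for t
      using that unfolding E_def local_group_def by auto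
    then show ?thesis unfolding admissible_erasure_def code_coords_def E_def N_def by auto
  qed
  define C where "C = punctured_code k r h H g E"
  have mds: "is_MDS_code k (h + 1) C"
    using assms(6) adm unfolding maximally_recoverable_def C_def by blast
  have cardC: "card C = CARD('a) ^ k" and minC: "Min (hamming_weight ` (C - {\<lambda>_. 0})) = h + 1"
    using mds unfolding is_MDS_code_def by auto
  have "card C > 0" using cardC by simp
  hence finC: "finite C" using card_ge_0_finite by blast
  define P where "P = (\<lambda>x c. if c \<in> code_coords k r h - E then codeword k h H g x c else (0::'a))"
  have Pc: "P x c = (if c < k + h then sym_val k H x c else 0)" for x c
    unfolding P_def code_coords_def E_def N_def codeword_def by auto
  have wt: "h + 1 \<le> hamming_weight (P x)" if "x \<in> messages k" "P x \<noteq> (\<lambda>_. 0)" for x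
  proof -
    have "P x \<in> C - {\<lambda>_. 0}" using that unfolding C_def punctured_code_def P_def by auto
    hence "Min (hamming_weight ` (C - {\<lambda>_. 0})) \<le> hamming_weight (P x)"
      using finC by (intro Min_le) auto
    thus ?thesis using minC by simp
  qed
  have key: "h + 1 \<le> card S + (h - card J)"
    if x: "x \<in> messages k" and S: "S \<subseteq> {..<k}" and xs: "\<forall>i<k. i \<notin> S \<longrightarrow> x i = 0"
      and ex: "\<exists>i<k. x i \<noteq> 0" and J: "J \<subseteq> {..<h}"
      and Jz: "\<forall>j\<in>J. (\<Sum>i<k. H j i * x i) = 0" for x S J
  proof -
    obtain i where i: "i < k" "x i \<noteq> 0" using ex by blast
    have "P x i \<noteq> 0" using i by (simp add: Pc sym_val_def)
    hence "P x \<noteq> (\<lambda>_. 0)" by metis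
    hence "h + 1 \<le> hamming_weight (P x)" using wt x by blast
    also have "hamming_weight (P x) \<le> card (S \<union> (\<lambda>j. k + j) ` ({..<h} - J))"
      unfolding hamming_weight_def
    proof (rule card_mono)
      show "finite (S \<union> (\<lambda>j. k + j) ` ({..<h} - J))" using S finite_subset by blast
      show "{c. P x c \<noteq> 0} \<subseteq> S \<union> (\<lambda>j. k + j) ` ({..<h} - J)"
      proof
        fix c assume "c \<in> {c. P x c \<noteq> 0}"
        hence c: "P x c \<noteq> 0" by simp
        hence ch: "c < k + h" by (simp add: Pc split: if_splits)
        show "c \<in> S \<union> (\<lambda>j. k + j) ` ({..<h} - J)"
        proof (cases "c < k")
          case True
          then show ?thesis using c xs by (auto simp: Pc sym_val_def)
        next
          case False
          hence "(\<Sum>i<k. H (c - k) i * x i) \<noteq> 0" using c ch by (simp add: Pc sym_val_def)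
          hence "c - k \<notin> J" using Jz by auto
          moreover have "c = k + (c - k)" using False by simp
          ultimately show ?thesis using ch False by (auto intro!: image_eqI[where x="c-k"])
        qed
      qed
    qed
    also have "\<dots> \<le> card S + card ((\<lambda>j. k + j) ` ({..<h} - J))"
      by (rule card_Un_le)
    also have "card ((\<lambda>j. k + j) ` ({..<h} - J)) \<le> card ({..<h} - J)"
      by (rule card_image_le) simp
    also have "card ({..<h} - J) = h - card J"
      using J by (simp add: card_Diff_subset finite_subset)
    finally show ?thesis by simp
  qed
  define a where "a i = H 0 i" for i
  define b where "b i = H 1 i" for i
  have unit_msg: "(\<lambda>c. if c = i then (1::'a) else 0) \<in> messages k" if "i < k" for i
    using that unfolding messages_def by auto
  have anz: "a i \<noteq> 0" if "i < k" for i
  proof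
    assume "a i = 0"
    have "h + 1 \<le> card {i} + (h - card {0::nat})"
      apply (rule key[OF unit_msg[OF that]])
      using that assms(3) \<open>a i = 0\<close> by (auto simp: a_def if_distrib cong: if_cong)
    thus False using assms(3) by simp
  qed
  have bnz: "b i \<noteq> 0" if "i < k" for i
  proof
    assume "b i = 0"
    have "h + 1 \<le> card {i} + (h - card {1::nat})"
      apply (rule key[OF unit_msg[OF that]])
      using that assms(3) \<open>b i = 0\<close> by (auto simp: b_def if_distrib cong: if_cong)
    thus False using assms(3) by simp
  qed
  define f where "f i = b i / a i" for i
  have inj: "inj_on f {..<k}"
  proof (rule inj_onI)
    fix i j assume i: "i \<in> {..<k}" and j: "j \<in> {..<k}" and fe: "f i = f j"
    show "i = j"
    proof (rule ccontr)
      assume ne: "i \<noteq> j"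
      have ai: "a i \<noteq> 0" and aj: "a j \<noteq> 0" using anz i j by auto
      have rel: "b i * a j = b j * a i" using fe ai aj unfolding f_def by (simp add: field_simps)
      define x where "x = (\<lambda>c. (if c = i then a j else 0) + (if c = j then - a i else (0::'a)))"
      have xm: "x \<in> messages k" using i j unfolding messages_def x_def by auto
      have s: "(\<Sum>l<k. H m l * x l) = H m i * a j - H m j * a i" for m
      proof -
        have "(\<Sum>l<k. H m l * x l) = (\<Sum>l<k. (if l = i then H m l * a j else 0))
              + (\<Sum>l<k. (if l = j then - (H m l * a i) else 0))"
        proof -
          have "H m l * x l = (if l = i then H m l * a j else 0) + (if l = j then - (H m l * a i) else 0)" for l
            unfolding x_def by (simp add: distrib_left)
          thus ?thesis by (simp add: sum.distrib)
        qed
        also have "\<dots> = H m i * a j - H m j * a i" using i j by (simp add: sum.delta)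
        finally show ?thesis .
      qed
      have s0: "(\<Sum>l<k. H 0 l * x l) = 0" using s[of 0] by (simp add: a_def mult.commute)
      have s1: "(\<Sum>l<k. H 1 l * x l) = 0" using s[of 1] rel by (simp add: a_def b_def mult.commute)
      have xi: "x i \<noteq> 0" using ne aj unfolding x_def by simp
      have xo: "\<forall>l<k. l \<notin> {i, j} \<longrightarrow> x l = 0" unfolding x_def by simp
      have "h + 1 \<le> card {i, j} + (h - card {0::nat, 1})"
        apply (rule key[OF xm _ xo])
        using i j xi assms(3) s0 s1 by auto
      thus False using assms(3) ne by simp
    qed
  qed
  have "f ` {..<k} \<subseteq> UNIV - {0}" using anz bnz unfolding f_def by auto
  hence "card (f ` {..<k}) \<le> card (UNIV - {0::'a})" by (intro card_mono) auto
  hence "k \<le> CARD('a) - 1" using inj card_image[OF inj] by (simp add: card_Diff_subset)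
  moreover have "CARD('a) \<ge> 1" by (simp add: Suc_leI)
  ultimately show ?thesis by linarith
qed

end
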